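(* Let $(q_n)$ be the Fibonacci Quilt sequence. There is a constant $\rho\in(0,1)$, $\rho\approx0.92627$, such that the proportion of integers $m\in[1,q_n)$ for which the greedy decomposition of $m$ is an FQ-legal decomposition converges to $\rho$ as $n\to\infty$.
   Context: Given an increasing sequence of positive integers $(q_i)_{i\ge1}$, an FQ-legal decomposition of an integer $m\ge0$ is an expression $m=q_{\ell_1}+q_{\ell_2}+\cdots+q_{\ell_t}$ ($t\ge0$, the empty sum representing $0$) with distinct indices $\ell_1>\ell_2>\cdots>\ell_t$ such that $|\ell_i-\ell_j|\notin\{1,3,4\}$ for all $i,j$, and $\{1,3\}\not\subset\{\ell_1,\dots,\ell_t\}$. The Fibonacci Quilt sequence is the increasing sequence of positive integers $(q_i)_{i\ge1}$ in which each $q_i$ is the smallest positive integer having no FQ-legal decomposition using only $q_1,\dots,q_{i-1}$. Its first terms are $1,2,3,4,5,7,9,12,16,21,28,37,49,\dots$. The greedy decomposition of a positive integer $m$ is obtained by choosing the largest $q_k\le m$ as a summand and, if $m-q_k>0$, recursively appending the greedy decomposition of $m-q_k$; the greedy algorithm succeeds on $m$ if the resulting decomposition is FQ-legal. *)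

theory Defs
  imports Complex_Main
begin

definition FQ_legal_set :: "nat set \<Rightarrow> bool" where
  "FQ_legal_set S \<longleftrightarrow> finite S \<and> (\<forall>i\<in>S. 1 \<le> i)
     \<and> (\<forall>i\<in>S. \<forall>j\<in>S. nat \<bar>int i - int j\<bar> \<notin> {1, 3, 4})
     \<and> \<not> ({1, 3} \<subseteq> S)"

definition FQ_legal_list :: "nat list \<Rightarrow> bool" where
  "FQ_legal_list ks \<longleftrightarrow> sorted_wrt (>) ks \<and> FQ_legal_set (set ks)"

text \<open>First n terms q_1,...,q_n of the Fibonacci Quilt sequence (list position i-1 holds q_i).\<close>
primrec fq_list :: "nat \<Rightarrow> nat list" where
  "fq_list 0 = []"
| "fq_list (Suc n) = fq_list n @
     [LEAST m. 0 < m \<and> \<not> (\<exists>S. S \<subseteq> {1..n} \<and> FQ_legal_set S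
                               \<and> (\<Sum>i\<in>S. fq_list n ! (i - 1)) = m)]"

definition fq :: "nat \<Rightarrow> nat" where
  "fq i = fq_list i ! (i - 1)"

inductive greedy_dec :: "nat \<Rightarrow> nat list \<Rightarrow> bool" where
  greedy_zero: "greedy_dec 0 []"
| greedy_step: "\<lbrakk> 0 < m; 1 \<le> k; fq k \<le> m;
                  \<forall>j. 1 \<le> j \<and> fq j \<le> m \<longrightarrow> fq j \<le> fq k;
                  greedy_dec (m - fq k) ks \<rbrakk> \<Longrightarrow> greedy_dec m (k # ks)"

definition greedy_succeeds :: "nat \<Rightarrow> bool" where
  "greedy_succeeds m \<longleftrightarrow> (\<exists>ks. greedy_dec m ks \<and> FQ_legal_list ks)"

end

theory Submission
  imports Defs
begin


fun qq :: "nat \<Rightarrow> nat" where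
  "qq n = (if n \<le> 5 then n else qq (n-2) + qq (n-3))"
declare qq.simps[simp del]

lemma qq_small: "n \<le> 5 \<Longrightarrow> qq n = n"
  by (simp add: qq.simps)

lemma qq_rec: "3 \<le> n \<Longrightarrow> qq (n+3) = qq (n+1) + qq n"
  by (subst qq.simps) simp

lemma qq_rec': "6 \<le> n \<Longrightarrow> qq n = qq (n-2) + qq (n-3)"
  by (subst qq.simps) simp

lemma qq6: "qq 6 = 7" and qq7: "qq 7 = 9"
  by (simp_all add: qq.simps)

lemma qq_mono_Suc: "qq n < qq (Suc n)"
proof (induction n rule: less_induct)
  case (less n)
  show ?case
  proof (cases "n \<le> 4")
    case True then show ?thesis by (simp add: qq_small)
  next
    case False
    show ?thesis
    proof (cases "n = 5")
      case True then show ?thesis by (simp add: qq_small qq6)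
    next
      case False
      with \<open>\<not> n \<le> 4\<close> have n6: "n \<ge> 6" by simp
      have a: "qq (Suc n) = qq (n-1) + qq (n-2)" using qq_rec'[of "Suc n"] n6 by simp
      have b: "qq n = qq (n-2) + qq (n-3)" using qq_rec'[of n] n6 by simp
      have c1: "qq (n-3) < qq (Suc (n-3))" using less.IH[of "n-3"] n6 by simp
      have c2: "qq (n-2) < qq (Suc (n-2))" using less.IH[of "n-2"] n6 by simp
      have e1: "Suc (n-3) = n-2" "Suc (n-2) = n-1" using n6 by auto
      have c: "qq (n-3) < qq (n-1)" using c1 c2 e1 by simp
      show ?thesis using a b c by simp
    qed
  qed
qed

lemma qq_strict: "i < j \<Longrightarrow> qq i < qq j"
  using lift_Suc_mono_less[of qq] qq_mono_Suc by blast

lemma qq_le_iff: "qq i \<le> qq j \<longleftrightarrow> i \<le> j"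
  by (metis leD leI less_imp_le qq_strict order.refl nat_less_le)

lemma qq_less_iff: "qq i < qq j \<longleftrightarrow> i < j"
  by (meson leD leI qq_le_iff qq_strict)

lemma qq_ge: "n \<le> qq n"
  by (induction n) (auto intro: Suc_leI order.trans[OF _ less_imp_le[OF qq_mono_Suc]] dest: qq_mono_Suc[THEN order.strict_trans1[rotated]])

lemma qq_diff: "6 \<le> n \<Longrightarrow> qq (Suc n) = qq n + qq (n-4)"
proof -
  assume n6: "6 \<le> n"
  show ?thesis
  proof (cases "n = 6")
    case True then show ?thesis by (simp add: qq6 qq7 qq_small)
  next
    case False
    then have n7: "n \<ge> 7" using n6 by simp
    have a: "qq (Suc n) = qq (n-1) + qq (n-2)" using qq_rec'[of "Suc n"] n7 by simp
    have b: "qq n = qq (n-2) + qq (n-3)" using qq_rec'[of n] n7 by simp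
    have c: "qq (n-1) = qq (n-3) + qq (n-4)" using qq_rec'[of "n-1"] n7 by (simp add: numeral_eq_Suc)
    show ?thesis using a b c by simp
  qed
qed

lemma legal_subset: "FQ_legal_set S \<Longrightarrow> T \<subseteq> S \<Longrightarrow> FQ_legal_set T"
  unfolding FQ_legal_set_def by (meson finite_subset subset_iff order_trans)

lemma legal_ge1: "FQ_legal_set S \<Longrightarrow> i \<in> S \<Longrightarrow> 1 \<le> i"
  unfolding FQ_legal_set_def by blast

lemma legal_fin: "FQ_legal_set S \<Longrightarrow> finite S"
  unfolding FQ_legal_set_def by blast

lemma legal_gap: "FQ_legal_set S \<Longrightarrow> i \<in> S \<Longrightarrow> j \<in> S \<Longrightarrow> i < j \<Longrightarrow>
    j - i \<noteq> 1 \<and> j - i \<noteq> 3 \<and> j - i \<noteq> 4"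
proof -
  assume a: "FQ_legal_set S" "i \<in> S" "j \<in> S" "i < j"
  have "nat \<bar>int i - int j\<bar> = j - i" using a(4) by simp
  moreover have "nat \<bar>int i - int j\<bar> \<notin> {1,3,4}" using a unfolding FQ_legal_set_def by blast
  ultimately show ?thesis by auto
qed

lemma legal_13: "FQ_legal_set S \<Longrightarrow> 1 \<in> S \<Longrightarrow> 3 \<notin> S"
  unfolding FQ_legal_set_def by blast

lemma legal_insert:
  assumes "FQ_legal_set S" "S \<subseteq> {1..k}" "k + 5 \<le> n" "6 \<le> n"
  shows "FQ_legal_set (insert n S)"
proof -
  have fin: "finite (insert n S)" using assms(1) legal_fin by blast
  have ge: "\<forall>i\<in>insert n S. 1 \<le> i" using assms(2,4) by auto
  have d: "nat \<bar>int i - int j\<bar> \<notin> {1, 3, 4}" if hi: "i \<in> insert n S" and hj: "j \<in> insert n S" for i j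
  proof -
    consider "i = n" "j = n" | "i = n" "j \<in> S" | "j = n" "i \<in> S" | "i \<in> S" "j \<in> S"
      using hi hj by blast
    then show ?thesis
    proof cases
      case 1 then show ?thesis by simp
    next
      case 2 then have "j \<le> k" using assms(2) by auto
      then show ?thesis using 2 assms(3) by auto
    next
      case 3 then have "i \<le> k" using assms(2) by auto
      then show ?thesis using 3 assms(3) by auto
    next
      case 4 then show ?thesis using assms(1) unfolding FQ_legal_set_def by blast
    qed
  qed
  have "\<not> {1,3} \<subseteq> insert n S" using assms(1,4) unfolding FQ_legal_set_def by auto
  then show ?thesis unfolding FQ_legal_set_def using fin ge d by blast
qed

lemma legal_empty: "FQ_legal_set {}"
  unfolding FQ_legal_set_def by simp

lemma legal_single: "1 \<le> i \<Longrightarrow> FQ_legal_set {i}"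
  unfolding FQ_legal_set_def by simp

lemma legal_24: "FQ_legal_set {2,4}"
  unfolding FQ_legal_set_def by simp

lemma rep_exists: "m < qq (Suc n) \<Longrightarrow> \<exists>S. S \<subseteq> {1..n} \<and> FQ_legal_set S \<and> sum qq S = m"
proof (induction n arbitrary: m rule: less_induct)
  case (less n)
  show ?case
  proof (cases "n \<le> 5")
    case True
    show ?thesis
    proof (cases "m = 0")
      case True then show ?thesis using legal_empty by (intro exI[of _ "{}"]) auto
    next
      case m0: False
      show ?thesis
      proof (cases "m \<le> 5 \<and> m \<le> n")
        case True
        then show ?thesis using m0 legal_single[of m] qq_small[of m]
          by (intro exI[of _ "{m}"]) auto
      next
        case False
        have "qq (Suc n) \<le> 7" using \<open>n \<le> 5\<close> qq6 qq_small[of "Suc n"] by (cases "n = 5") auto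
        then have "m = 6" "n = 5" using False less.prems \<open>n \<le> 5\<close> qq_small[of "Suc n"] qq6
          by (cases "n = 5"; auto)+
        then show ?thesis using legal_24 qq_small[of 2] qq_small[of 4]
          by (intro exI[of _ "{2,4}"]) auto
      qed
    qed
  next
    case False
    then have n6: "6 \<le> n" by simp
    show ?thesis
    proof (cases "m < qq n")
      case True
      then obtain S where "S \<subseteq> {1..n-1}" "FQ_legal_set S" "sum qq S = m"
        using less.IH[of "n-1" m] n6 by auto
      then show ?thesis by (intro exI[of _ S]) force
    next
      case False
      have "m - qq n < qq (Suc (n-5))" using less.prems qq_diff[OF n6] False n6
        by (simp add: Suc_diff_Suc numeral_eq_Suc)
      then obtain S where S: "S \<subseteq> {1..n-5}" "FQ_legal_set S" "sum qq S = m - qq n"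
        using less.IH[of "n-5" "m - qq n"] n6 by auto
      have nS: "n \<notin> S" using S(1) n6 by auto
      have "FQ_legal_set (insert n S)" using legal_insert[OF S(2) S(1)] n6 by simp
      moreover have "sum qq (insert n S) = m" using nS S(3) False legal_fin[OF S(2)] by simp
      moreover have "insert n S \<subseteq> {1..n}" using S(1) n6 by (auto dest!: subsetD)
      ultimately show ?thesis by blast
    qed
  qed
qed

lemma small_legal:
  assumes "S \<subseteq> {1..5}" "FQ_legal_set S"
  shows "S = {} \<or> S = {1} \<or> S = {2} \<or> S = {3} \<or> S = {4} \<or> S = {5} \<or> S = {2,4} \<or> S = {3,5}"
proof -
  have h: "\<not> (a \<in> S \<and> b \<in> S)" if "a < b" "b - a = 1 \<or> b - a = 3 \<or> b - a = 4" for a b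
    using legal_gap[OF assms(2), of a b] that by auto
  have p12: "\<not> (1 \<in> S \<and> 2 \<in> S)" and p14: "\<not> (1 \<in> S \<and> 4 \<in> S)"
    and p15: "\<not> (1 \<in> S \<and> 5 \<in> S)" and p23: "\<not> (2 \<in> S \<and> 3 \<in> S)"
    and p25: "\<not> (2 \<in> S \<and> 5 \<in> S)" and p34: "\<not> (3 \<in> S \<and> 4 \<in> S)"
    and p45: "\<not> (4 \<in> S \<and> 5 \<in> S)"
    using h[of 1 2] h[of 1 4] h[of 1 5] h[of 2 3] h[of 2 5] h[of 3 4] h[of 4 5] by auto
  have p13: "\<not> (1 \<in> S \<and> 3 \<in> S)" using legal_13[OF assms(2)] by blast
  have s: "\<And>x. x \<in> S \<Longrightarrow> x = 1 \<or> x = 2 \<or> x = 3 \<or> x = 4 \<or> x = 5"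
    using assms(1) by auto
  have eq: "S = (if 1 \<in> S then {1} else {}) \<union> (if 2 \<in> S then {2} else {}) \<union>
     (if 3 \<in> S then {3} else {}) \<union> (if 4 \<in> S then {4} else {}) \<union> (if 5 \<in> S then {5} else {})"
    (is "S = ?R")
  proof
    show "S \<subseteq> ?R" using s by fastforce
    show "?R \<subseteq> S" by auto
  qed
  define b1 where "b1 = (1 \<in> S)"
  define b2 where "b2 = (2 \<in> S)"
  define b3 where "b3 = (3 \<in> S)"
  define b4 where "b4 = (4 \<in> S)"
  define b5 where "b5 = (5 \<in> S)"
  have eq2: "S = (if b1 then {1} else {}) \<union> (if b2 then {2} else {}) \<union>
     (if b3 then {3} else {}) \<union> (if b4 then {4} else {}) \<union> (if b5 then {5} else {})"
    using eq unfolding b1_def b2_def b3_def b4_def b5_def .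
  have c: "\<not>(b1 \<and> b2)" "\<not>(b1 \<and> b3)" "\<not>(b1 \<and> b4)" "\<not>(b1 \<and> b5)" "\<not>(b2 \<and> b3)"
     "\<not>(b2 \<and> b5)" "\<not>(b3 \<and> b4)" "\<not>(b4 \<and> b5)"
    unfolding b1_def b2_def b3_def b4_def b5_def using p12 p13 p14 p15 p23 p25 p34 p45 by auto
  show ?thesis
    unfolding eq2 using c by (cases b1; cases b2; cases b3; cases b4; cases b5) (simp_all add: insert_commute)
qed

lemma top_split:
  assumes "FQ_legal_set S" "S \<subseteq> {1..j}" "j \<in> S" "x \<in> S" "x \<noteq> j"
  shows "x = j - 2 \<or> x + 5 \<le> j"
proof -
  have "x \<le> j" using assms(2,4) by auto
  then have "x < j" using assms(5) by simp
  then have "j - x \<noteq> 1 \<and> j - x \<noteq> 3 \<and> j - x \<noteq> 4" using legal_gap[OF assms(1,4,3)] by blast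
  then show ?thesis using \<open>x < j\<close> by auto
qed

lemma top2:
  assumes "FQ_legal_set S" "S \<subseteq> {1..j}" "j \<in> S" "j - 2 \<in> S" "3 \<le> j" "x \<in> S" "x \<noteq> j" "x \<noteq> j - 2"
  shows "x + 7 \<le> j"
proof -
  have a: "x + 5 \<le> j" using top_split[OF assms(1,2,3,6,7)] assms(8) by blast
  then have "x < j - 2" by simp
  then have "(j-2) - x \<noteq> 1 \<and> (j-2) - x \<noteq> 3 \<and> (j-2) - x \<noteq> 4" using legal_gap[OF assms(1,6,4)] by blast
  then show ?thesis using a by auto
qed

lemma sum_small: "j \<le> 2 \<Longrightarrow> sum qq {1..j} < j + 3"
proof -
  assume "j \<le> 2"
  then have "j = 0 \<or> j = 1 \<or> j = 2" by auto
  then show ?thesis by (auto simp: qq_small numeral_2_eq_2)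
qed

lemma bound: "FQ_legal_set S \<Longrightarrow> S \<subseteq> {1..j} \<Longrightarrow> sum qq S < qq (j+3)"
proof (induction j arbitrary: S rule: less_induct)
  case (less j)
  have fin: "finite S" using legal_fin[OF less.prems(1)] .
  show ?case
  proof (cases "j \<le> 2")
    case True
    have "sum qq S \<le> sum qq {1..j}" by (rule sum_mono2) (use less.prems in auto)
    also have "\<dots> < j + 3" using sum_small[OF True] .
    also have "\<dots> = qq (j+3)" using True by (simp add: qq_small)
    finally show ?thesis .
  next
    case False
    then have j3: "3 \<le> j" by simp
    have rec: "qq (j+3) = qq (j+1) + qq j" using qq_rec[OF j3] .
    show ?thesis
    proof (cases "j \<in> S")
      case False
      have "S \<subseteq> {1..j-1}"
      proof
        fix x assume "x \<in> S"
        then have "x \<in> {1..j}" "x \<noteq> j" using less.prems(2) False by auto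
        then show "x \<in> {1..j-1}" by auto
      qed
      then have "sum qq S < qq (j - 1 + 3)" using less.IH[of "j-1" S] less.prems(1) j3 by simp
      also have "qq (j-1+3) < qq (j+3)" using j3 qq_strict by simp
      finally show ?thesis .
    next
      case jS: True
      define T where "T = S - {j}"
      have sumS: "sum qq S = qq j + sum qq T" unfolding T_def using fin jS by (simp add: sum.remove)
      have legT: "FQ_legal_set T" using legal_subset[OF less.prems(1)] unfolding T_def by blast
      have finT: "finite T" using fin unfolding T_def by simp
      have "sum qq T < qq (j+1)"
      proof (cases "j - 2 \<in> S")
        case True
        define U where "U = T - {j-2}"
        have j2T: "j - 2 \<in> T" using True j3 unfolding T_def by auto
        have sumT: "sum qq T = qq (j-2) + sum qq U" unfolding U_def using finT j2T by (simp add: sum.remove)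
        have legU: "FQ_legal_set U" using legal_subset[OF legT] unfolding U_def by blast
        have Usub: "U \<subseteq> {1..j-7}"
        proof
          fix x assume "x \<in> U"
          then have "x \<in> S" "x \<noteq> j" "x \<noteq> j - 2" unfolding U_def T_def by auto
          then have "x + 7 \<le> j" using top2[OF less.prems(1,2) jS True j3] by blast
          moreover have "1 \<le> x" using legal_ge1[OF less.prems(1) \<open>x \<in> S\<close>] .
          ultimately show "x \<in> {1..j-7}" by simp
        qed
        show ?thesis
        proof (cases "7 \<le> j")
          case True
          have "sum qq U < qq (j - 7 + 3)" using less.IH[OF _ legU Usub] True by simp
          also have "j - 7 + 3 = j - 4" using True by simp
          finally have u: "sum qq U < qq (j-4)" .
          have "qq (j-4) \<le> qq (j-1)" using qq_le_iff by simp
          moreover have "qq (j+1) = qq (j-1) + qq (j-2)" using qq_rec'[of "j+1"] True by simp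
          ultimately show ?thesis using sumT u by simp
        next
          case False
          then have "U = {}" using Usub by auto
          then show ?thesis using sumT qq_strict[of "j-2" "j+1"] by simp
        qed
      next
        case False
        have Tsub: "T \<subseteq> {1..j-5}"
        proof
          fix x assume "x \<in> T"
          then have "x \<in> S" "x \<noteq> j" "x \<noteq> j - 2" using False unfolding T_def by auto
          then have "x + 5 \<le> j" using top_split[OF less.prems(1,2) jS] by blast
          moreover have "1 \<le> x" using legal_ge1[OF less.prems(1) \<open>x \<in> S\<close>] .
          ultimately show "x \<in> {1..j-5}" by simp
        qed
        show ?thesis
        proof (cases "5 \<le> j")
          case True
          have "sum qq T < qq (j - 5 + 3)" using less.IH[OF _ legT Tsub] True by simp
          also have "j - 5 + 3 = j - 2" using True by simp
          also have "qq (j-2) < qq (j+1)" using qq_strict True by simp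
          finally show ?thesis .
        next
          case False
          then have "T = {}" using Tsub by auto
          then show ?thesis using qq_strict[of 0 "j+1"] by (simp add: qq_small)
        qed
      qed
      then show ?thesis using sumS rec by simp
    qed
  qed
qed

lemma sub_remove:
  assumes "S \<subseteq> {1..j}" "FQ_legal_set S" "\<And>x. x \<in> S \<Longrightarrow> x \<noteq> j \<Longrightarrow> x + d \<le> j"
  shows "S - {j} \<subseteq> {1..j-d}"
proof
  fix x assume "x \<in> S - {j}"
  then show "x \<in> {1..j-d}" using assms(3)[of x] legal_ge1[OF assms(2), of x] by auto
qed

lemma nonrep: "FQ_legal_set S \<Longrightarrow> S \<subseteq> {1..n} \<Longrightarrow> sum qq S \<noteq> qq (Suc n)"
proof (induction n arbitrary: S rule: less_induct)
  case (less n)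
  have fin: "finite S" using legal_fin[OF less.prems(1)] .
  show ?case
  proof (cases "n \<le> 5")
    case True
    have "S \<subseteq> {1..5}" using less.prems(2) True by auto
    from small_legal[OF this less.prems(1)]
    show ?thesis using less.prems(2) True qq_small[of "Suc n"] qq6
      by (cases "n = 5") (auto simp: qq_small)
  next
    case False
    then have n6: "6 \<le> n" by simp
    show ?thesis
    proof
      assume eqS: "sum qq S = qq (Suc n)"
      show False
      proof (cases "n \<in> S")
        case nS: True
        define T where "T = S - {n}"
        have sumS: "sum qq S = qq n + sum qq T" unfolding T_def using fin nS by (simp add: sum.remove)
        have sT: "sum qq T = qq (n-4)" using sumS eqS qq_diff[OF n6] by simp
        show False
        proof (cases "n - 2 \<in> S")
          case True
          then have "n - 2 \<in> T" unfolding T_def using n6 by auto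
          then have "qq (n-2) \<le> sum qq T" using fin unfolding T_def
            by (intro member_le_sum) auto
          moreover have "qq (n-4) < qq (n-2)" using qq_strict n6 by simp
          ultimately show False using sT by simp
        next
          case False
          have "T \<subseteq> {1..n-5}" unfolding T_def
            using sub_remove[OF less.prems(2,1)] top_split[OF less.prems(1,2) nS] False by blast
          moreover have legT: "FQ_legal_set T" using legal_subset[OF less.prems(1)] unfolding T_def by blast
          ultimately have "sum qq T \<noteq> qq (Suc (n-5))" using less.IH[of "n-5" T] n6 by simp
          moreover have "Suc (n-5) = n - 4" using n6 by simp
          ultimately show False using sT by simp
        qed
      next
        case nnS: False
        have S1: "S \<subseteq> {1..n-1}"
        proof
          fix x assume "x \<in> S"
          then have "x \<in> {1..n}" "x \<noteq> n" using less.prems(2) nnS by auto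
          then show "x \<in> {1..n-1}" by auto
        qed
        show False
        proof (cases "n - 1 \<in> S")
          case n1S: True
          define T where "T = S - {n-1}"
          have sumS: "sum qq S = qq (n-1) + sum qq T" unfolding T_def using fin n1S by (simp add: sum.remove)
          have "qq (Suc n) = qq (n-1) + qq (n-2)" using qq_rec'[of "Suc n"] n6 by simp
          then have sT: "sum qq T = qq (n-2)" using sumS eqS by simp
          have legT: "FQ_legal_set T" using legal_subset[OF less.prems(1)] unfolding T_def by blast
          have finT: "finite T" using fin unfolding T_def by simp
          have nn: "n - 1 - 2 = n - 3" by simp
          show False
          proof (cases "n - 3 \<in> S")
            case True
            define U where "U = T - {n-3}"
            have n3T: "n - 3 \<in> T" using True n6 unfolding T_def by auto
            have sumT: "sum qq T = qq (n-3) + sum qq U" unfolding U_def using finT n3T by (simp add: sum.remove)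
            have legU: "FQ_legal_set U" using legal_subset[OF legT] unfolding U_def by blast
            have Usub: "U \<subseteq> {1..n-8}"
            proof
              fix x assume "x \<in> U"
              then have "x \<in> S" "x \<noteq> n-1" "x \<noteq> n - 1 - 2" unfolding U_def T_def nn by auto
              then have "x + 7 \<le> n - 1" using top2[OF less.prems(1) S1 n1S] True nn n6 by simp
              moreover have "1 \<le> x" using legal_ge1[OF less.prems(1) \<open>x \<in> S\<close>] .
              ultimately show "x \<in> {1..n-8}" by simp
            qed
            show False
            proof (cases "9 \<le> n")
              case True
              have "qq (Suc (n-3)) = qq (n-3) + qq (n-3-4)" using qq_diff[of "n-3"] True by simp
              moreover have "Suc (n-3) = n - 2" "n - 3 - 4 = n - 7" using True by auto
              ultimately have "sum qq U = qq (n-7)" using sT sumT by simp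
              moreover have "sum qq U \<noteq> qq (Suc (n-8))" using less.IH[of "n-8" U] legU Usub True by simp
              moreover have "Suc (n-8) = n - 7" using True by simp
              ultimately show False by simp
            next
              case False
              then have "U = {}" using Usub by auto
              moreover have "n - 3 < n - 2" using n6 by simp
              ultimately show False using sT sumT qq_strict[of "n-3" "n-2"] by simp
            qed
          next
            case False
            have "T \<subseteq> {1..n-1-5}" unfolding T_def
            proof (rule sub_remove[OF S1 less.prems(1)])
              fix x assume "x \<in> S" "x \<noteq> n - 1"
              then have "x \<noteq> n - 1 - 2" using False nn by auto
              then show "x + 5 \<le> n - 1" using top_split[OF less.prems(1) S1 n1S \<open>x \<in> S\<close> \<open>x \<noteq> n - 1\<close>] by blast
            qed
            then have "sum qq T < qq (n-1-5+3)" using bound legT by blast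
            moreover have "n - 1 - 5 + 3 = n - 3" using n6 by simp
            moreover have "qq (n-3) < qq (n-2)" using qq_strict n6 by simp
            ultimately show False using sT by simp
          qed
        next
          case False
          have "S \<subseteq> {1..n-2}"
          proof
            fix x assume "x \<in> S"
            then have "x \<in> {1..n-1}" "x \<noteq> n-1" using S1 False by auto
            then show "x \<in> {1..n-2}" by auto
          qed
          then have "sum qq S < qq (n-2+3)" using bound less.prems(1) by blast
          moreover have "n - 2 + 3 = Suc n" using n6 by simp
          ultimately show False using eqS by simp
        qed
      qed
    qed
  qed
qed

lemma fq_list_eq: "fq_list n = map qq [1..<Suc n]"
proof (induction n)
  case 0 then show ?case by simp
next
  case (Suc n)
  have cong: "(\<Sum>i\<in>S. fq_list n ! (i - 1)) = sum qq S" if "S \<subseteq> {1..n}" for S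
  proof (rule sum.cong)
    fix i assume "i \<in> S"
    then have "1 \<le> i" "i \<le> n" using that by auto
    then show "fq_list n ! (i - 1) = qq i" using Suc.IH by (simp del: upt_Suc add: nth_map)
  qed simp
  have L: "(LEAST m. 0 < m \<and> \<not> (\<exists>S. S \<subseteq> {1..n} \<and> FQ_legal_set S
                               \<and> (\<Sum>i\<in>S. fq_list n ! (i - 1)) = m)) = qq (Suc n)"
  proof (rule Least_equality)
    show "0 < qq (Suc n) \<and> \<not> (\<exists>S. S \<subseteq> {1..n} \<and> FQ_legal_set S
                               \<and> (\<Sum>i\<in>S. fq_list n ! (i - 1)) = qq (Suc n))"
      using cong nonrep qq_ge[of "Suc n"] by fastforce
  next
    fix y assume y: "0 < y \<and> \<not> (\<exists>S. S \<subseteq> {1..n} \<and> FQ_legal_set S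
                               \<and> (\<Sum>i\<in>S. fq_list n ! (i - 1)) = y)"
    show "qq (Suc n) \<le> y"
    proof (rule ccontr)
      assume "\<not> qq (Suc n) \<le> y"
      then obtain S where "S \<subseteq> {1..n}" "FQ_legal_set S" "sum qq S = y"
        using rep_exists[of y n] by auto
      then show False using y cong by metis
    qed
  qed
  show ?case using Suc.IH L by simp
qed

lemma fq_eq: "1 \<le> i \<Longrightarrow> fq i = qq i"
  unfolding fq_def fq_list_eq by (simp del: upt_Suc add: nth_map)



lemma fq_le_iff: "1 \<le> i \<Longrightarrow> 1 \<le> j \<Longrightarrow> fq i \<le> fq j \<longleftrightarrow> i \<le> j"
  using fq_eq qq_le_iff by simp

lemma greedy_top:
  assumes "greedy_dec m (k#ks)"
  shows "0 < m \<and> 1 \<le> k \<and> qq k \<le> m \<and> m < qq (Suc k) \<and> greedy_dec (m - qq k) ks"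
  using assms
proof cases
  case greedy_step
  have "\<not> qq (Suc k) \<le> m"
  proof
    assume "qq (Suc k) \<le> m"
    then have "1 \<le> Suc k \<and> fq (Suc k) \<le> m" using fq_eq[of "Suc k"] by simp
    then have "fq (Suc k) \<le> fq k" using greedy_step by blast
    then show False using fq_le_iff[of "Suc k" k] greedy_step by simp
  qed
  then show ?thesis using greedy_step fq_eq by auto
qed

lemma greedy_nil: "greedy_dec m [] \<Longrightarrow> m = 0"
  by (cases rule: greedy_dec.cases) auto

lemma greedy_zero_only: "greedy_dec 0 ks \<Longrightarrow> ks = []"
  by (cases rule: greedy_dec.cases) auto

lemma qq_bracket: "1 \<le> m \<Longrightarrow> \<exists>k. 1 \<le> k \<and> qq k \<le> m \<and> m < qq (Suc k)"
proof -
  assume m: "1 \<le> m"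
  define k where "k = (LEAST k. m < qq (Suc k))"
  have P: "m < qq (Suc k)" unfolding k_def
    by (rule LeastI[of _ m]) (use qq_ge[of "Suc m"] in simp)
  have k0: "k \<noteq> 0"
  proof
    assume "k = 0" then show False using P m qq_small[of 1] by simp
  qed
  have "\<not> m < qq (Suc (k-1))" unfolding k_def
    using not_less_Least[of "k-1" "\<lambda>k. m < qq (Suc k)"] k0 k_def by simp
  then show ?thesis using P k0 by (intro exI[of _ k]) auto
qed

lemma bracket_unique: "qq k \<le> m \<Longrightarrow> m < qq (Suc k) \<Longrightarrow> qq k' \<le> m \<Longrightarrow> m < qq (Suc k') \<Longrightarrow> k = k'"
proof -
  assume a: "qq k \<le> m" "m < qq (Suc k)" "qq k' \<le> m" "m < qq (Suc k')"
  have "qq k < qq (Suc k')" using a by simp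
  then have "k < Suc k'" using qq_less_iff by blast
  moreover have "qq k' < qq (Suc k)" using a by simp
  then have "k' < Suc k" using qq_less_iff by blast
  ultimately show "k = k'" by simp
qed

lemma greedy_step':
  assumes "1 \<le> k" "qq k \<le> m" "m < qq (Suc k)" "greedy_dec (m - qq k) ks"
  shows "greedy_dec m (k#ks)"
proof (rule greedy_step)
  show "0 < m" using assms(1,2) qq_ge[of k] by simp
  show "1 \<le> k" "greedy_dec (m - fq k) ks" "fq k \<le> m" using assms fq_eq by auto
  show "\<forall>j. 1 \<le> j \<and> fq j \<le> m \<longrightarrow> fq j \<le> fq k"
  proof (intro allI impI)
    fix j assume "1 \<le> j \<and> fq j \<le> m"
    then have "qq j < qq (Suc k)" "1 \<le> j" using fq_eq assms(3) by auto
    then show "fq j \<le> fq k" using fq_eq assms(1) qq_less_iff qq_le_iff by simp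
  qed
qed

lemma greedy_exists: "\<exists>ks. greedy_dec m ks"
proof (induction m rule: less_induct)
  case (less m)
  show ?case
  proof (cases "m = 0")
    case True then show ?thesis using greedy_zero by blast
  next
    case False
    then obtain k where k: "1 \<le> k" "qq k \<le> m" "m < qq (Suc k)" using qq_bracket[of m] False by auto
    have "m - qq k < m" using k qq_ge[of k] by simp
    then obtain ks where "greedy_dec (m - qq k) ks" using less.IH by blast
    then show ?thesis using greedy_step'[OF k] by blast
  qed
qed

lemma greedy_unique: "greedy_dec m ks1 \<Longrightarrow> greedy_dec m ks2 \<Longrightarrow> ks1 = ks2"
proof (induction arbitrary: ks2 rule: greedy_dec.induct)
  case greedy_zero then show ?case using greedy_zero_only by blast
next
  case (greedy_step m k ks)
  obtain k' ks' where ks2: "ks2 = k' # ks'"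
    using greedy_step.prems greedy_nil greedy_step.hyps(1) by (cases ks2) auto
  have t1: "qq k \<le> m" "m < qq (Suc k)" using greedy_top[OF greedy_dec.greedy_step[OF greedy_step.hyps(1-5)]] by auto
  have t2: "qq k' \<le> m" "m < qq (Suc k')" "greedy_dec (m - qq k') ks'" using greedy_top greedy_step.prems ks2 by auto
  have "k = k'" using bracket_unique t1 t2 by blast
  moreover have "fq k = qq k" using fq_eq greedy_step.hyps(2) by simp
  ultimately show ?case using greedy_step.IH t2(3) ks2 by simp
qed

lemma greedy_elems: "greedy_dec m ks \<Longrightarrow> i \<in> set ks \<Longrightarrow> 1 \<le> i \<and> qq i \<le> m"
proof (induction arbitrary: i rule: greedy_dec.induct)
  case greedy_zero then show ?case by simp
next
  case (greedy_step m k ks)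
  show ?case
  proof (cases "i = k")
    case True then show ?thesis using greedy_step.hyps fq_eq[of k] by auto
  next
    case False then have "i \<in> set ks" using greedy_step.prems by simp
    then have "1 \<le> i \<and> qq i \<le> m - fq k" using greedy_step.IH by blast
    then show ?thesis by auto
  qed
qed

lemma greedy_shift:
  assumes n6: "6 \<le> n" and m: "qq n \<le> m" "m < qq (Suc n)"
  shows "greedy_succeeds m \<longleftrightarrow> greedy_succeeds (m - qq n)"
proof -
  have small: "i + 5 \<le> n" if "greedy_dec (m - qq n) ks'" "i \<in> set ks'" for ks' i
  proof -
    have "qq i \<le> m - qq n" using greedy_elems that by blast
    also have "\<dots> < qq (n-4)" using m qq_diff[OF n6] by simp
    finally have "i < n - 4" using qq_less_iff by simp
    then show ?thesis by simp
  qed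
  have eqv: "FQ_legal_list (n # ks') \<longleftrightarrow> FQ_legal_list ks'" if g: "greedy_dec (m - qq n) ks'" for ks'
  proof
    assume "FQ_legal_list (n # ks')"
    then have a: "sorted_wrt (>) (n # ks')" "FQ_legal_set (insert n (set ks'))" unfolding FQ_legal_list_def by auto
    have "sorted_wrt (>) ks'" using a(1) by simp
    moreover have "FQ_legal_set (set ks')" using legal_subset[OF a(2)] by blast
    ultimately show "FQ_legal_list ks'" unfolding FQ_legal_list_def by blast
  next
    assume L: "FQ_legal_list ks'"
    have sub: "set ks' \<subseteq> {1..n-5}"
    proof
      fix x assume "x \<in> set ks'"
      then have "x + 5 \<le> n" "1 \<le> x" using small[OF g] greedy_elems[OF g] by auto
      then show "x \<in> {1..n-5}" by simp
    qed
    have "FQ_legal_set (insert n (set ks'))" using legal_insert[of "set ks'" "n-5" n] L sub n6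
      unfolding FQ_legal_list_def by simp
    moreover have "\<forall>x\<in>set ks'. x < n"
    proof
      fix x assume "x \<in> set ks'" then have "x + 5 \<le> n" using small[OF g] by blast
      then show "x < n" by simp
    qed
    ultimately show "FQ_legal_list (n # ks')" using L unfolding FQ_legal_list_def by simp
  qed
  have gd: "greedy_dec m ks \<longleftrightarrow> (\<exists>ks'. ks = n # ks' \<and> greedy_dec (m - qq n) ks')" for ks
  proof
    assume g: "greedy_dec m ks"
    have "m \<noteq> 0" using m qq_ge[of n] n6 by simp
    have "ks \<noteq> []" using g greedy_nil \<open>m \<noteq> 0\<close> by blast
    then obtain k ks' where ks: "ks = k # ks'" by (cases ks) auto
    have t: "qq k \<le> m" "m < qq (Suc k)" "greedy_dec (m - qq k) ks'" using greedy_top g ks by auto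
    have "k = n" using bracket_unique t m by blast
    then show "\<exists>ks'. ks = n # ks' \<and> greedy_dec (m - qq n) ks'" using ks t by blast
  next
    assume "\<exists>ks'. ks = n # ks' \<and> greedy_dec (m - qq n) ks'"
    then show "greedy_dec m ks" using greedy_step'[of n m] m n6 by auto
  qed
  show ?thesis
  proof
    assume "greedy_succeeds m"
    then obtain ks where "greedy_dec m ks" "FQ_legal_list ks" unfolding greedy_succeeds_def by blast
    then obtain ks' where "ks = n # ks'" "greedy_dec (m - qq n) ks'" using gd by blast
    then show "greedy_succeeds (m - qq n)" unfolding greedy_succeeds_def
      using eqv \<open>FQ_legal_list ks\<close> by blast
  next
    assume "greedy_succeeds (m - qq n)"
    then obtain ks' where "greedy_dec (m - qq n) ks'" "FQ_legal_list ks'" unfolding greedy_succeeds_def by blast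
    then have "greedy_dec m (n # ks')" "FQ_legal_list (n # ks')" using gd eqv by blast+
    then show "greedy_succeeds m" unfolding greedy_succeeds_def by blast
  qed
qed

definition Gc :: "nat \<Rightarrow> nat" where "Gc n = card {m. m < qq n \<and> greedy_succeeds m}"

lemma gs_zero: "greedy_succeeds 0"
  unfolding greedy_succeeds_def FQ_legal_list_def using greedy_zero legal_empty by force

lemma gs_small: "m \<le> 5 \<Longrightarrow> greedy_succeeds m"
proof (cases "m = 0")
  case True then show ?thesis using gs_zero by simp
next
  case False
  assume m5: "m \<le> 5"
  have "m < qq (Suc m)" using m5 qq6 qq_small[of "Suc m"] by (cases "m = 5") auto
  then have "greedy_dec m [m]" using greedy_step'[of m m "[]"] False m5 qq_small[of m] greedy_zero by simp
  moreover have "FQ_legal_list [m]" unfolding FQ_legal_list_def using legal_single[of m] False by simp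
  ultimately show ?thesis unfolding greedy_succeeds_def by blast
qed

lemma not_gs6: "\<not> greedy_succeeds 6"
proof
  have g1: "greedy_dec 1 [1]" using greedy_step'[of 1 1 "[]"] greedy_zero qq_small[of 1] qq_small[of 2] by (simp add: numeral_2_eq_2)
  have g: "greedy_dec 6 [5,1]" using greedy_step'[of 5 6 "[1]"] g1 qq_small[of 5] qq6 by simp
  assume "greedy_succeeds 6"
  then obtain ks where "greedy_dec 6 ks" "FQ_legal_list ks" unfolding greedy_succeeds_def by blast
  then have "FQ_legal_list [5,1]" using greedy_unique[OF g] by blast
  then show False unfolding FQ_legal_list_def FQ_legal_set_def by auto
qed

lemma Gc_small: "n \<le> 6 \<Longrightarrow> Gc n = n"
proof -
  assume n6: "n \<le> 6"
  have "{m. m < qq n \<and> greedy_succeeds m} = {..<n}"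
  proof (cases "n = 6")
    case True
    have "m < 7 \<and> greedy_succeeds m \<longleftrightarrow> m < 6" for m
      using gs_small[of m] not_gs6 by (cases "m = 6") auto
    then show ?thesis using True qq6 by auto
  next
    case False
    then show ?thesis using n6 gs_small qq_small[of n] by auto
  qed
  then show ?thesis unfolding Gc_def by simp
qed

lemma Gc_rec: "6 \<le> n \<Longrightarrow> Gc (Suc n) = Gc n + Gc (n-4)"
proof -
  assume n6: "6 \<le> n"
  let ?A = "{m. m < qq n \<and> greedy_succeeds m}"
  let ?B = "{x. x < qq (n-4) \<and> greedy_succeeds x}"
  have qs: "qq (Suc n) = qq n + qq (n-4)" using qq_diff[OF n6] .
  have eq: "{m. m < qq (Suc n) \<and> greedy_succeeds m} = ?A \<union> (\<lambda>x. x + qq n) ` ?B"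
  proof (intro equalityI subsetI)
    fix m assume "m \<in> {m. m < qq (Suc n) \<and> greedy_succeeds m}"
    then have m: "m < qq (Suc n)" "greedy_succeeds m" by auto
    show "m \<in> ?A \<union> (\<lambda>x. x + qq n) ` ?B"
    proof (cases "m < qq n")
      case True then show ?thesis using m by auto
    next
      case False
      then have "greedy_succeeds (m - qq n)" using greedy_shift[OF n6 _ m(1)] m(2) by simp
      moreover have "m - qq n < qq (n-4)" using m(1) qs False by simp
      moreover have "m = (m - qq n) + qq n" using False by simp
      ultimately show ?thesis by blast
    qed
  next
    fix m assume "m \<in> ?A \<union> (\<lambda>x. x + qq n) ` ?B"
    then show "m \<in> {m. m < qq (Suc n) \<and> greedy_succeeds m}"
    proof
      assume "m \<in> ?A" then show ?thesis using qq_mono_Suc[of n] by auto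
    next
      assume "m \<in> (\<lambda>x. x + qq n) ` ?B"
      then obtain x where x: "m = x + qq n" "x < qq (n-4)" "greedy_succeeds x" by auto
      have "m < qq (Suc n)" using x qs by simp
      moreover have "greedy_succeeds m" using greedy_shift[OF n6 _ \<open>m < qq (Suc n)\<close>] x by simp
      ultimately show ?thesis by simp
    qed
  qed
  have disj: "?A \<inter> (\<lambda>x. x + qq n) ` ?B = {}" by auto
  have "card (?A \<union> (\<lambda>x. x + qq n) ` ?B) = card ?A + card ((\<lambda>x. x + qq n) ` ?B)"
    by (rule card_Un_disjoint) (use disj in auto)
  also have "card ((\<lambda>x. x + qq n) ` ?B) = card ?B" by (rule card_image) (simp add: inj_on_def)
  finally show ?thesis unfolding Gc_def using eq by simp
qed

lemma card_target: "1 \<le> n \<Longrightarrow> card {m \<in> {1..<fq n}. greedy_succeeds m} = Gc n - 1"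
proof -
  assume n: "1 \<le> n"
  have "{m \<in> {1..<fq n}. greedy_succeeds m} = {m. m < qq n \<and> greedy_succeeds m} - {0}"
    using fq_eq[OF n] by auto
  moreover have "0 \<in> {m. m < qq n \<and> greedy_succeeds m}" using gs_zero qq_ge[of n] n by simp
  ultimately show ?thesis unfolding Gc_def by simp
qed



lemma ratio_conv:
  fixes a q :: "nat \<Rightarrow> real" and N :: nat and M m0 :: real
  assumes pa: "\<And>n. N \<le> n \<Longrightarrow> a (n+3) = a (n+1) + a n"
      and pq: "\<And>n. N \<le> n \<Longrightarrow> q (n+3) = q (n+1) + q n"
      and m0: "0 < m0"
      and q0: "m0 \<le> q N" "m0 * (13/10) \<le> q (N+1)" "m0 * (13/10)^2 \<le> q (N+2)"
      and w0: "\<bar>a (N+1) * q N - a N * q (N+1)\<bar> \<le> M"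
              "\<bar>a (N+2) * q (N+1) - a (N+1) * q (N+2)\<bar> \<le> M * (3/2)"
              "\<bar>a (N+3) * q (N+2) - a (N+2) * q (N+3)\<bar> \<le> M * (3/2)^2"
  shows "\<exists>\<rho>. (\<lambda>n. a n / q n) \<longlonglongrightarrow> \<rho> \<and> \<bar>\<rho> - a N / q N\<bar> \<le> M / (m0^2 * (13/10)) * (169/19)"
proof -
  define r :: real where "r = 13/10"
  define \<beta> :: real where "\<beta> = 3/2"
  define W where "W n = a (n+1) * q n - a n * q (n+1)" for n
  have qlow: "m0 * r^k \<le> q (N+k)" for k
  proof (induction k rule: less_induct)
    case (less k)
    show ?case
    proof (cases "k < 3")
      case True
      then have "k = 0 \<or> k = 1 \<or> k = 2" by auto
      then show ?thesis using q0 unfolding r_def by (auto simp: numeral_2_eq_2)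
    next
      case False
      then obtain j where j: "k = j + 3" by (metis add.commute le_Suc_ex not_less)
      have "q (N+k) = q (N+j+1) + q (N+j)" using pq[of "N+j"] j by (simp add: add.assoc)
      also have "\<dots> \<ge> m0 * r^(j+1) + m0 * r^j"
        using less.IH[of "j+1"] less.IH[of j] j by (simp add: add.assoc add_mono)
      finally have "m0 * r^(j+1) + m0 * r^j \<le> q (N+k)" .
      moreover have "m0 * r^k \<le> m0 * r^(j+1) + m0 * r^j"
      proof -
        have "r^3 \<le> r + 1" unfolding r_def by (simp add: power3_eq_cube)
        then have "r^j * r^3 \<le> r^j * (r+1)" by (rule mult_left_mono) (auto simp: r_def)
        then have "m0 * (r^j * r^3) \<le> m0 * (r^j * (r+1))" by (rule mult_left_mono) (use m0 in auto)
        then show ?thesis using j by (simp add: power_add algebra_simps)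
      qed
      ultimately show ?thesis by linarith
    qed
  qed
  have rpos: "0 < r" unfolding r_def by simp
  have qpos: "0 < q (N+k)" for k using qlow[of k] m0 rpos by (meson less_le_trans mult_pos_pos zero_less_power)
  have Wrec: "W (n+3) = W n - W (n+2)" if "N \<le> n" for n
  proof -
    have "a (n+4) = a (n+2) + a (n+1)" "q (n+4) = q (n+2) + q (n+1)"
      using pa[of "n+1"] pq[of "n+1"] that by (simp_all add: add.assoc add.commute)
    moreover have "a (n+3) = a (n+1) + a n" "q (n+3) = q (n+1) + q n" using pa pq that by auto
    ultimately show ?thesis unfolding W_def by (simp add: algebra_simps numeral_eq_Suc)
  qed
  have wup: "\<bar>W (N+k)\<bar> \<le> M * \<beta>^k" for k
  proof (induction k rule: less_induct)
    case (less k)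
    show ?case
    proof (cases "k < 3")
      case True
      then have "k = 0 \<or> k = 1 \<or> k = 2" by auto
      then show ?thesis using w0 unfolding \<beta>_def W_def by (auto simp: numeral_2_eq_2 numeral_3_eq_3 add.assoc)
    next
      case False
      then obtain j where j: "k = j + 3" by (metis add.commute le_Suc_ex not_less)
      have "W (N+k) = W (N+j) - W (N+j+2)" using Wrec[of "N+j"] j by (simp add: add.assoc)
      then have "\<bar>W (N+k)\<bar> \<le> \<bar>W (N+j)\<bar> + \<bar>W (N+(j+2))\<bar>" by (simp add: add.assoc)
      also have "\<dots> \<le> M * \<beta>^j + M * \<beta>^(j+2)" using less.IH[of j] less.IH[of "j+2"] j by simp
      also have "\<dots> \<le> M * \<beta>^k"
      proof -
        have M0: "0 \<le> M" using w0(1) by linarith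
        have "1 + \<beta>^2 \<le> \<beta>^3" unfolding \<beta>_def by (simp add: power3_eq_cube power2_eq_square)
        then have "\<beta>^j * (1 + \<beta>^2) \<le> \<beta>^j * \<beta>^3" by (rule mult_left_mono) (auto simp: \<beta>_def)
        then have "M * (\<beta>^j * (1 + \<beta>^2)) \<le> M * (\<beta>^j * \<beta>^3)" by (rule mult_left_mono) (use M0 in auto)
        then show ?thesis using j by (simp add: power_add algebra_simps power2_eq_square)
      qed
      finally show ?thesis .
    qed
  qed
  define d where "d k = a (N + Suc k) / q (N + Suc k) - a (N+k) / q (N+k)" for k
  define C where "C = M / (m0^2 * r)"
  define \<gamma> where "\<gamma> = \<beta> / r^2"
  have \<gamma>v: "\<gamma> = 150/169" unfolding \<gamma>_def \<beta>_def r_def by (simp add: power2_eq_square)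
  have dW: "d k = W (N+k) / (q (N+k) * q (N+k+1))" for k
    unfolding d_def W_def using qpos[of k] qpos[of "Suc k"]
    by (simp add: field_simps)
  have dbound: "\<bar>d k\<bar> \<le> C * \<gamma>^k" for k
  proof -
    have "\<bar>d k\<bar> = \<bar>W (N+k)\<bar> / (q (N+k) * q (N+k+1))" using dW qpos[of k] qpos[of "Suc k"] by (simp add: abs_mult)
    also have "\<dots> \<le> M * \<beta>^k / (q (N+k) * q (N+k+1))"
      using wup[of k] qpos[of k] qpos[of "Suc k"] by (intro divide_right_mono) auto
    also have "\<dots> \<le> M * \<beta>^k / ((m0 * r^k) * (m0 * r^(k+1)))"
    proof (rule divide_left_mono)
      show "0 \<le> M * \<beta>^k" using w0(1) by (intro mult_nonneg_nonneg) (auto simp: \<beta>_def)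
      show "m0 * r^k * (m0 * r^(k+1)) \<le> q (N+k) * q (N+k+1)"
        using qlow[of k] qlow[of "k+1"] m0 rpos qpos[of k] by (intro mult_mono) (auto simp: add.assoc)
      show "0 < q (N+k) * q (N+k+1) * (m0 * r^k * (m0 * r^(k+1)))"
        using qpos[of k] qpos[of "Suc k"] m0 rpos by simp
    qed
    also have "\<dots> = C * \<gamma>^k"
    proof -
      have "\<gamma>^k = \<beta>^k / (r^k * r^k)" unfolding \<gamma>_def
        by (simp add: power_divide power2_eq_square power_mult_distrib)
      then show ?thesis unfolding C_def using m0 rpos by (simp add: field_simps power2_eq_square)
    qed
    finally show ?thesis .
  qed
  have gsum: "summable (\<lambda>k. C * \<gamma>^k)" using \<gamma>v by (intro summable_mult summable_geometric) simp
  have dsum: "summable d"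
    by (rule summable_comparison_test[OF _ gsum]) (use dbound in auto)
  have gval: "(\<Sum>k. C * \<gamma>^k) = C * (169/19)" unfolding \<gamma>v by (simp add: suminf_mult suminf_geometric)
  have dle: "\<bar>suminf d\<bar> \<le> C * (169/19)"
    using norm_suminf_le[of d "\<lambda>k. C * \<gamma>^k"] dbound gsum gval by simp
  define \<rho> where "\<rho> = a N / q N + suminf d"
  have tel: "a (N+k) / q (N+k) = a N / q N + (\<Sum>i<k. d i)" for k
  proof -
    have "(\<Sum>i<k. d i) = (\<Sum>i<k. (\<lambda>j. a (N+j) / q (N+j)) (Suc i) - (\<lambda>j. a (N+j) / q (N+j)) i)"
      unfolding d_def by simp
    also have "\<dots> = a (N+k) / q (N+k) - a N / q N" by (subst sum_lessThan_telescope) simp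
    finally show ?thesis by simp
  qed
  have "(\<lambda>k. a N / q N + (\<Sum>i<k. d i)) \<longlonglongrightarrow> \<rho>"
    unfolding \<rho>_def by (intro tendsto_add tendsto_const summable_LIMSEQ dsum)
  then have "(\<lambda>k. a (k + N) / q (k + N)) \<longlonglongrightarrow> \<rho>" using tel by (simp add: add.commute)
  then have lim: "(\<lambda>n. a n / q n) \<longlonglongrightarrow> \<rho>" by (rule LIMSEQ_offset)
  have "\<bar>\<rho> - a N / q N\<bar> \<le> M / (m0^2 * (13/10)) * (169/19)"
    using dle unfolding \<rho>_def C_def r_def by simp
  then show ?thesis using lim by blast
qed




lemma qv5: "qq 5 = 5" and qv4: "qq 4 = 4" and qv3: "qq 3 = 3" and qv6: "qq 6 = 7" by (simp_all add: qq_small qq6)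

lemma qv7: "qq 7 = 9" using qq_rec'[of 7] qv5 qv4 by simp

lemma qv8: "qq 8 = 12" using qq_rec'[of 8] qv6 qv5 by simp

lemma qv9: "qq 9 = 16" using qq_rec'[of 9] qv7 qv6 by simp

lemma qv10: "qq 10 = 21" using qq_rec'[of 10] qv8 qv7 by simp

lemma qv11: "qq 11 = 28" using qq_rec'[of 11] qv9 qv8 by simp

lemma qv12: "qq 12 = 37" using qq_rec'[of 12] qv10 qv9 by simp

lemma qv13: "qq 13 = 49" using qq_rec'[of 13] qv11 qv10 by simp

lemma qv14: "qq 14 = 65" using qq_rec'[of 14] qv12 qv11 by simp

lemma qv15: "qq 15 = 86" using qq_rec'[of 15] qv13 qv12 by simp

lemma qv16: "qq 16 = 114" using qq_rec'[of 16] qv14 qv13 by simp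

lemma qv17: "qq 17 = 151" using qq_rec'[of 17] qv15 qv14 by simp

lemma qv18: "qq 18 = 200" using qq_rec'[of 18] qv16 qv15 by simp

lemma qv19: "qq 19 = 265" using qq_rec'[of 19] qv17 qv16 by simp

lemma qv20: "qq 20 = 351" using qq_rec'[of 20] qv18 qv17 by simp

lemma qv21: "qq 21 = 465" using qq_rec'[of 21] qv19 qv18 by simp

lemma qv22: "qq 22 = 616" using qq_rec'[of 22] qv20 qv19 by simp

lemma qv23: "qq 23 = 816" using qq_rec'[of 23] qv21 qv20 by simp

lemma qv24: "qq 24 = 1081" using qq_rec'[of 24] qv22 qv21 by simp

lemma qv25: "qq 25 = 1432" using qq_rec'[of 25] qv23 qv22 by simp

lemma qv26: "qq 26 = 1897" using qq_rec'[of 26] qv24 qv23 by simp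

lemma qv27: "qq 27 = 2513" using qq_rec'[of 27] qv25 qv24 by simp

lemma qv28: "qq 28 = 3329" using qq_rec'[of 28] qv26 qv25 by simp

lemma qv29: "qq 29 = 4410" using qq_rec'[of 29] qv27 qv26 by simp

lemma qv30: "qq 30 = 5842" using qq_rec'[of 30] qv28 qv27 by simp

lemma qv31: "qq 31 = 7739" using qq_rec'[of 31] qv29 qv28 by simp

lemma qv32: "qq 32 = 10252" using qq_rec'[of 32] qv30 qv29 by simp

lemma qv33: "qq 33 = 13581" using qq_rec'[of 33] qv31 qv30 by simp

lemma qv34: "qq 34 = 17991" using qq_rec'[of 34] qv32 qv31 by simp

lemma qv35: "qq 35 = 23833" using qq_rec'[of 35] qv33 qv32 by simp

lemma qv36: "qq 36 = 31572" using qq_rec'[of 36] qv34 qv33 by simp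

lemma qv37: "qq 37 = 41824" using qq_rec'[of 37] qv35 qv34 by simp

lemma qv38: "qq 38 = 55405" using qq_rec'[of 38] qv36 qv35 by simp

lemma qv39: "qq 39 = 73396" using qq_rec'[of 39] qv37 qv36 by simp

lemma qv40: "qq 40 = 97229" using qq_rec'[of 40] qv38 qv37 by simp

lemma qv41: "qq 41 = 128801" using qq_rec'[of 41] qv39 qv38 by simp

lemma qv42: "qq 42 = 170625" using qq_rec'[of 42] qv40 qv39 by simp

lemma qv43: "qq 43 = 226030" using qq_rec'[of 43] qv41 qv40 by simp

lemma Gv2: "Gc 2 = 2" and Gv3: "Gc 3 = 3" and Gv4: "Gc 4 = 4" and Gv5: "Gc 5 = 5" and Gv6: "Gc 6 = 6" by (simp_all add: Gc_small)

lemma Gv7: "Gc 7 = 8" using Gc_rec[of 6] Gv6 Gv2 by simp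

lemma Gv8: "Gc 8 = 11" using Gc_rec[of 7] Gv7 Gv3 by simp

lemma Gv9: "Gc 9 = 15" using Gc_rec[of 8] Gv8 Gv4 by simp

lemma Gv10: "Gc 10 = 20" using Gc_rec[of 9] Gv9 Gv5 by simp

lemma Gv11: "Gc 11 = 26" using Gc_rec[of 10] Gv10 Gv6 by simp

lemma Gv12: "Gc 12 = 34" using Gc_rec[of 11] Gv11 Gv7 by simp

lemma Gv13: "Gc 13 = 45" using Gc_rec[of 12] Gv12 Gv8 by simp

lemma Gv14: "Gc 14 = 60" using Gc_rec[of 13] Gv13 Gv9 by simp

lemma Gv15: "Gc 15 = 80" using Gc_rec[of 14] Gv14 Gv10 by simp

lemma Gv16: "Gc 16 = 106" using Gc_rec[of 15] Gv15 Gv11 by simp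

lemma Gv17: "Gc 17 = 140" using Gc_rec[of 16] Gv16 Gv12 by simp

lemma Gv18: "Gc 18 = 185" using Gc_rec[of 17] Gv17 Gv13 by simp

lemma Gv19: "Gc 19 = 245" using Gc_rec[of 18] Gv18 Gv14 by simp

lemma Gv20: "Gc 20 = 325" using Gc_rec[of 19] Gv19 Gv15 by simp

lemma Gv21: "Gc 21 = 431" using Gc_rec[of 20] Gv20 Gv16 by simp

lemma Gv22: "Gc 22 = 571" using Gc_rec[of 21] Gv21 Gv17 by simp

lemma Gv23: "Gc 23 = 756" using Gc_rec[of 22] Gv22 Gv18 by simp

lemma Gv24: "Gc 24 = 1001" using Gc_rec[of 23] Gv23 Gv19 by simp

lemma Gv25: "Gc 25 = 1326" using Gc_rec[of 24] Gv24 Gv20 by simp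

lemma Gv26: "Gc 26 = 1757" using Gc_rec[of 25] Gv25 Gv21 by simp

lemma Gv27: "Gc 27 = 2328" using Gc_rec[of 26] Gv26 Gv22 by simp

lemma Gv28: "Gc 28 = 3084" using Gc_rec[of 27] Gv27 Gv23 by simp

lemma Gv29: "Gc 29 = 4085" using Gc_rec[of 28] Gv28 Gv24 by simp

lemma Gv30: "Gc 30 = 5411" using Gc_rec[of 29] Gv29 Gv25 by simp

lemma Gv31: "Gc 31 = 7168" using Gc_rec[of 30] Gv30 Gv26 by simp

lemma Gv32: "Gc 32 = 9496" using Gc_rec[of 31] Gv31 Gv27 by simp

lemma Gv33: "Gc 33 = 12580" using Gc_rec[of 32] Gv32 Gv28 by simp

lemma Gv34: "Gc 34 = 16665" using Gc_rec[of 33] Gv33 Gv29 by simp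

lemma Gv35: "Gc 35 = 22076" using Gc_rec[of 34] Gv34 Gv30 by simp

lemma Gv36: "Gc 36 = 29244" using Gc_rec[of 35] Gv35 Gv31 by simp

lemma Gv37: "Gc 37 = 38740" using Gc_rec[of 36] Gv36 Gv32 by simp

lemma Gv38: "Gc 38 = 51320" using Gc_rec[of 37] Gv37 Gv33 by simp

lemma Gv39: "Gc 39 = 67985" using Gc_rec[of 38] Gv38 Gv34 by simp

lemma Gv40: "Gc 40 = 90061" using Gc_rec[of 39] Gv39 Gv35 by simp

lemma Gv41: "Gc 41 = 119305" using Gc_rec[of 40] Gv40 Gv36 by simp

lemma Gv42: "Gc 42 = 158045" using Gc_rec[of 41] Gv41 Gv37 by simp

lemma Gv43: "Gc 43 = 209365" using Gc_rec[of 42] Gv42 Gv38 by simp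

definition Pt :: "nat \<Rightarrow> int" where
  "Pt k = (if k = 0 then -2 else if k = 1 then -3 else if k = 2 then -1 else if k = 3 then 2 else if k = 4 then 3 else 1)"

definition H :: "nat \<Rightarrow> int" where "H n = 7 * int (Gc n) - Pt (n mod 6)"

lemma Pt_aux: "r < 6 \<Longrightarrow> Pt ((r+5) mod 6) = Pt ((r+4) mod 6) + Pt r"
proof -
  assume "r < 6"
  then have "r = 0 \<or> r = 1 \<or> r = 2 \<or> r = 3 \<or> r = 4 \<or> r = 5" by linarith
  then show ?thesis by (elim disjE) (simp_all add: Pt_def)
qed

lemma Pt_rec: "Pt ((k+5) mod 6) = Pt ((k+4) mod 6) + Pt (k mod 6)"
proof -
  have e5: "(k+5) mod 6 = (k mod 6+5) mod 6" by (simp add: mod_add_left_eq)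
  have e4: "(k+4) mod 6 = (k mod 6+4) mod 6" by (simp add: mod_add_left_eq)
  show ?thesis unfolding e5 e4 by (rule Pt_aux) simp
qed

lemma Pt_bound: "\<bar>Pt k\<bar> \<le> 3"
  unfolding Pt_def by simp

lemma H5: "2 \<le> k \<Longrightarrow> H (k+5) = H (k+4) + H k"
proof -
  assume k: "2 \<le> k"
  have "Gc (Suc (k+4)) = Gc (k+4) + Gc (k+4-4)" using Gc_rec[of "k+4"] k by simp
  then have "Gc (k+5) = Gc (k+4) + Gc k" by (simp add: add.commute)
  then show ?thesis unfolding H_def using Pt_rec[of k] by simp
qed

lemma Hv: "H 1 = 10" "H 2 = 15" "H 3 = 19" "H 4 = 25" "H 5 = 34" "H 6 = 44"
  unfolding H_def by (simp_all add: Gc_small Pt_def)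

lemma Hpad: "1 \<le> n \<Longrightarrow> H (n+3) = H (n+1) + H n"
proof (induction n rule: less_induct)
  case (less n)
  show ?case
  proof (cases "n \<le> 3")
    case True
    then have "n = 1 \<or> n = 2 \<or> n = 3" using less.prems by auto
    moreover have h: "H 4 = H 2 + H 1" "H 5 = H 3 + H 2" "H 6 = H 4 + H 3"
      using Hv by linarith+
    moreover have "n = 1 \<Longrightarrow> n + 3 = 4 \<and> n + 1 = 2" "n = 2 \<Longrightarrow> n + 3 = 5 \<and> n + 1 = 3"
      "n = 3 \<Longrightarrow> n + 3 = 6 \<and> n + 1 = 4" by simp_all
    ultimately show ?thesis by metis
  next
    case False
    have a: "H (n-2+5) = H (n-2+4) + H (n-2)" using H5[of "n-2"] False by simp
    have b: "H (n-1+3) = H (n-1+1) + H (n-1)" using less.IH[of "n-1"] False by simp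
    have c: "H (n-2+3) = H (n-2+1) + H (n-2)" using less.IH[of "n-2"] False by simp
    have e: "n-2+5 = n+3" "n-2+4 = n+2" "n-1+3 = n+2" "n-1+1 = n" "n-2+3 = n+1" "n-2+1 = n-1"
      using False by auto
    show ?thesis using a b c unfolding e by simp
  qed
qed

lemma qq_at_top: "filterlim (\<lambda>n. real (qq n)) at_top sequentially"
  by (rule filterlim_at_top_mono[OF filterlim_real_sequentially]) (auto simp: qq_ge)

lemma Gc_pos: "1 \<le> n \<Longrightarrow> 1 \<le> Gc n"
proof -
  assume n: "1 \<le> n"
  have "0 \<in> {m. m < qq n \<and> greedy_succeeds m}" using gs_zero qq_ge[of n] n by simp
  moreover have "finite {m. m < qq n \<and> greedy_succeeds m}" by simp
  ultimately show ?thesis unfolding Gc_def by (metis card_0_eq empty_iff less_one not_le)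
qed

theorem mainTheorem14:
  shows "\<exists>\<rho>::real. 0 < \<rho> \<and> \<rho> < 1 \<and> \<bar>\<rho> - 0.92627\<bar> < 0.00001 \<and>
    (\<lambda>n. real (card {m \<in> {1..<fq n}. greedy_succeeds m}) / real (fq n - 1))
      \<longlonglongrightarrow> \<rho>"
proof -
  define a where "a n = real_of_int (H n)" for n
  define q where "q n = real (qq n)" for n
  have pa: "a (n+3) = a (n+1) + a n" if "40 \<le> n" for n
    unfolding a_def using Hpad[of n] that by simp
  have pq: "q (n+3) = q (n+1) + q n" if "40 \<le> n" for n
    unfolding q_def using qq_rec[of n] that by simp
  have av: "a 40 = 630424" "a 41 = 835134" "a 42 = 1106317" "a 43 = 1465558"
    unfolding a_def H_def by (simp_all add: Gv40 Gv41 Gv42 Gv43 Pt_def)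
  have qv: "q 40 = 97229" "q 41 = 128801" "q 42 = 170625" "q 43 = 226030"
    unfolding q_def by (simp_all add: qv40 qv41 qv42 qv43)
  have c1: "(97229::real) \<le> q 40" "(97229::real) * (13/10) \<le> q (40+1)" "(97229::real) * (13/10)^2 \<le> q (40+2)"
    using qv by (simp_all add: power2_eq_square)
  have c2: "\<bar>a (40+1) * q 40 - a 40 * q (40+1)\<bar> \<le> 2062"
    "\<bar>a (40+2) * q (40+1) - a (40+1) * q (40+2)\<bar> \<le> 2062 * (3/2)"
    "\<bar>a (40+3) * q (40+2) - a (40+2) * q (40+3)\<bar> \<le> 2062 * (3/2)^2"
    using av qv by (simp_all add: power2_eq_square)
  obtain \<rho>' where lim: "(\<lambda>n. a n / q n) \<longlonglongrightarrow> \<rho>'"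
    and bd: "\<bar>\<rho>' - a 40 / q 40\<bar> \<le> 2062 / (97229^2 * (13/10)) * (169/19)"
    using ratio_conv[of 40 a q "97229" 2062, OF pa pq _ c1 c2] by auto
  define \<rho> where "\<rho> = \<rho>' / 7"
  have lo: "\<rho>' \<ge> 630424 / 97229 - 2062 / (97229^2 * (13/10)) * (169/19)"
    and hi: "\<rho>' \<le> 630424 / 97229 + 2062 / (97229^2 * (13/10)) * (169/19)"
  proof -
    have bd': "\<bar>\<rho>' - 630424 / 97229\<bar> \<le> 2062 / (97229^2 * (13/10)) * (169/19)"
      using bd av qv by simp
    show "\<rho>' \<ge> 630424 / 97229 - 2062 / (97229^2 * (13/10)) * (169/19)"
      using bd' unfolding abs_le_iff by linarith
    show "\<rho>' \<le> 630424 / 97229 + 2062 / (97229^2 * (13/10)) * (169/19)"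
      using bd' unfolding abs_le_iff by linarith
  qed
  have n1: "(630424 / 97229 - 2062 / (97229^2 * (13/10)) * (169/19)) / 7 > (0.92626::real)"
    by (simp add: power2_eq_square)
  have n2: "(630424 / 97229 + 2062 / (97229^2 * (13/10)) * (169/19)) / 7 < (0.92628::real)"
    by (simp add: power2_eq_square)
  have r1: "\<rho> > 0.92626" using n1 divide_right_mono[OF lo, of 7] unfolding \<rho>_def by linarith
  have r2: "\<rho> < 0.92628" using n2 divide_right_mono[OF hi, of 7] unfolding \<rho>_def by linarith
  have qpos: "q n > 0" if "1 \<le> n" for n using qq_ge[of n] that unfolding q_def by simp
  have iq: "(\<lambda>n. inverse (q n)) \<longlonglongrightarrow> 0"
    unfolding q_def by (rule tendsto_inverse_0_at_top[OF qq_at_top])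
  have pt: "(\<lambda>n. real_of_int (Pt (n mod 6)) / q n) \<longlonglongrightarrow> 0"
  proof (rule tendsto_0_le[OF iq, of _ 3])
    show "\<forall>\<^sub>F n in sequentially. norm (real_of_int (Pt (n mod 6)) / q n) \<le> norm (inverse (q n)) * 3"
    proof (rule eventually_sequentiallyI[of 1])
      fix n :: nat assume "1 \<le> n"
      then have qp: "q n > 0" using qpos by blast
      have "\<bar>real_of_int (Pt (n mod 6))\<bar> \<le> 3" using Pt_bound[of "n mod 6"] by linarith
      then show "norm (real_of_int (Pt (n mod 6)) / q n) \<le> norm (inverse (q n)) * 3"
        using qp by (simp add: abs_divide divide_right_mono field_simps)
    qed
  qed
  have Geq: "real (Gc n) / q n = (a n / q n + real_of_int (Pt (n mod 6)) / q n) / 7" for n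
  proof -
    have "a n + real_of_int (Pt (n mod 6)) = 7 * real (Gc n)" unfolding a_def H_def by simp
    then have "a n / q n + real_of_int (Pt (n mod 6)) / q n = 7 * real (Gc n) / q n"
      by (simp add: add_divide_distrib[symmetric])
    then show ?thesis by simp
  qed
  have G: "(\<lambda>n. real (Gc n) / q n) \<longlonglongrightarrow> \<rho>"
  proof -
    have "(\<lambda>n. (a n / q n + real_of_int (Pt (n mod 6)) / q n) / 7) \<longlonglongrightarrow> (\<rho>' + 0) / 7"
      by (intro tendsto_intros lim pt) simp
    then show ?thesis unfolding Geq \<rho>_def by simp
  qed
  have F: "(\<lambda>n. (real (Gc n) / q n - inverse (q n)) / (1 - inverse (q n))) \<longlonglongrightarrow> (\<rho> - 0) / (1 - 0)"
    by (intro tendsto_intros G iq) simp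
  have ev: "\<forall>\<^sub>F n in sequentially. (real (Gc n) / q n - inverse (q n)) / (1 - inverse (q n)) =
      real (card {m \<in> {1..<fq n}. greedy_succeeds m}) / real (fq n - 1)"
  proof (rule eventually_sequentiallyI[of 2])
    fix n :: nat assume n2: "2 \<le> n"
    have q2: "q n \<ge> 2" using qq_ge[of n] n2 unfolding q_def by simp
    have "real (card {m \<in> {1..<fq n}. greedy_succeeds m}) = real (Gc n) - 1"
      using card_target[of n] Gc_pos[of n] n2 by (simp add: of_nat_diff)
    moreover have "real (fq n - 1) = q n - 1" using fq_eq[of n] n2 qq_ge[of n] unfolding q_def by (simp add: of_nat_diff)
    moreover have "(real (Gc n) / q n - inverse (q n)) / (1 - inverse (q n)) = (real (Gc n) - 1) / (q n - 1)"
      using q2 by (simp add: field_simps)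
    ultimately show "(real (Gc n) / q n - inverse (q n)) / (1 - inverse (q n)) =
      real (card {m \<in> {1..<fq n}. greedy_succeeds m}) / real (fq n - 1)" by simp
  qed
  have "(\<lambda>n. real (card {m \<in> {1..<fq n}. greedy_succeeds m}) / real (fq n - 1)) \<longlonglongrightarrow> \<rho>"
    using Lim_transform_eventually[OF F ev] by simp
  moreover have "\<bar>\<rho> - 0.92627\<bar> < 0.00001" using r1 r2 unfolding abs_less_iff by simp
  moreover have "0 < \<rho>" "\<rho> < 1" using r1 r2 by simp_all
  ultimately show ?thesis by blast
qed


end
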